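(* Let $G\subseteq\mathrm{GL}_n(\mathbb{R})$ be a group of order two with fundamental invariants $\pi_1,\dots,\pi_m$ and Hilbert map $\Pi=(\pi_1,\dots,\pi_m)$. For $i=1,\dots,n$ let $f_i=X_i-\mathcal{R}_G(X_i)$, and let $f=\sum_{i=1}^n f_i^2$. Then $f\in\mathbb{R}[\underline{X}]^G$ and \[\Pi(\mathbb{R}^n)=\{z\in V_{\mathbb{R}}(I_\Pi)\mid \phi_z(f)\ge0\}.\]
   Context: $\mathbb{R}[\underline{X}]=\mathbb{R}[X_1,\dots,X_n]$, $G$ acts by $h^\sigma(x)=h(\sigma^{-1}x)$, $\mathbb{R}[\underline{X}]^G=\mathbb{R}[\pi_1,\dots,\pi_m]$, and $\mathcal{R}_G(h)=\frac{1}{|G|}\sum_{\sigma\in G}h^\sigma$. $I_\Pi$ is the ideal of relations among $\pi_1,\dots,\pi_m$, $V_{\mathbb{R}}(I_\Pi)\subseteq\mathbb{R}^m$ its real zero set, and for $z\in V_{\mathbb{R}}(I_\Pi)$, $\phi_z:\mathbb{R}[\underline{X}]^G\to\mathbb{R}$ is $g(\pi_1,\dots,\pi_m)\mapsto g(z)$. *)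

theory Defs
  imports "HOL-Analysis.Analysis"
begin

text \<open>Real polynomials in the variables indexed by the finite type 'i, represented
  faithfully by their polynomial functions on real^'i (over the infinite field R a
  polynomial is determined by its function).\<close>
inductive_set polyfun :: "(real^'i::finite \<Rightarrow> real) set" where
  const: "(\<lambda>x. c) \<in> polyfun"
| var: "(\<lambda>x. x $ i) \<in> polyfun"
| add: "p \<in> polyfun \<Longrightarrow> q \<in> polyfun \<Longrightarrow> (\<lambda>x. p x + q x) \<in> polyfun"
| mult: "p \<in> polyfun \<Longrightarrow> q \<in> polyfun \<Longrightarrow> (\<lambda>x. p x * q x) \<in> polyfun"

definition homogeneous :: "(real^'i::finite \<Rightarrow> real) \<Rightarrow> nat \<Rightarrow> bool" where
  "homogeneous p d \<longleftrightarrow> (\<forall>t x. p (t *\<^sub>R x) = t ^ d * p x)"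

definition matrix_group :: "(real^'n^'n) set \<Rightarrow> bool" where
  "matrix_group G \<longleftrightarrow> G \<subseteq> {A. invertible A} \<and> mat 1 \<in> G \<and>
     (\<forall>A\<in>G. \<forall>B\<in>G. A ** B \<in> G) \<and> (\<forall>A\<in>G. matrix_inv A \<in> G)"

definition act :: "real^'n^'n \<Rightarrow> (real^'n \<Rightarrow> real) \<Rightarrow> (real^'n \<Rightarrow> real)" where
  "act \<sigma> h = (\<lambda>x. h (matrix_inv \<sigma> *v x))"

definition invariant_ring :: "(real^'n^'n::finite) set \<Rightarrow> (real^'n \<Rightarrow> real) set" where
  "invariant_ring G = {h \<in> polyfun. \<forall>\<sigma>\<in>G. act \<sigma> h = h}"

definition reynolds :: "(real^'n^'n) set \<Rightarrow> (real^'n \<Rightarrow> real) \<Rightarrow> (real^'n \<Rightarrow> real)" where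
  "reynolds G h = (\<lambda>x. (1 / real (card G)) * (\<Sum>\<sigma>\<in>G. act \<sigma> h x))"

definition hilbert_map :: "('m \<Rightarrow> (real^'n \<Rightarrow> real)) \<Rightarrow> real^'n \<Rightarrow> real^'m" where
  "hilbert_map \<pi> x = (\<chi> j. \<pi> j x)"

definition fundamental_invariants ::
  "(real^'n^'n::finite) set \<Rightarrow> ('m::finite \<Rightarrow> (real^'n \<Rightarrow> real)) \<Rightarrow> bool" where
  "fundamental_invariants G \<pi> \<longleftrightarrow>
     (\<forall>j. \<pi> j \<in> invariant_ring G \<and> (\<exists>d>0. homogeneous (\<pi> j) d)) \<and>
     (\<forall>h \<in> invariant_ring G. \<exists>g \<in> polyfun. h = g \<circ> hilbert_map \<pi>)"

definition relation_ideal :: "('m::finite \<Rightarrow> (real^'n \<Rightarrow> real)) \<Rightarrow> (real^'m \<Rightarrow> real) set" where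
  "relation_ideal \<pi> = {g \<in> polyfun. \<forall>x. g (hilbert_map \<pi> x) = 0}"

definition real_variety :: "(real^'m::finite \<Rightarrow> real) set \<Rightarrow> (real^'m) set" where
  "real_variety I = {z. \<forall>g\<in>I. g z = 0}"

text \<open>phi_z(g(pi_1,...,pi_m)) = g(z); well defined for z in V_R(I_Pi).\<close>
definition phi :: "('m::finite \<Rightarrow> (real^'n \<Rightarrow> real)) \<Rightarrow> real^'m \<Rightarrow> (real^'n \<Rightarrow> real) \<Rightarrow> real" where
  "phi \<pi> z h = (SOME g. g \<in> polyfun \<and> h = g \<circ> hilbert_map \<pi>) z"

end

theory Submission
  imports Defs
begin

lemma polyfun_const: "(\<lambda>x. c) \<in> polyfun" by (rule polyfun.const)

lemma polyfun_sum: "finite S \<Longrightarrow> (\<And>i. i \<in> S \<Longrightarrow> p i \<in> polyfun) \<Longrightarrow> (\<lambda>x. \<Sum>i\<in>S. p i x) \<in> polyfun"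
proof (induction S rule: finite_induct)
  case empty then show ?case by (simp add: polyfun.const)
next
  case (insert a F)
  then have "(\<lambda>x. p a x + (\<Sum>i\<in>F. p i x)) \<in> polyfun"
    by (intro polyfun.add) auto
  then show ?case using insert by simp
qed

lemma polyfun_cmult: "p \<in> polyfun \<Longrightarrow> (\<lambda>x. c * p x) \<in> polyfun"
  using polyfun.mult[OF polyfun.const, of p c] by simp

lemma polyfun_diff: "p \<in> polyfun \<Longrightarrow> q \<in> polyfun \<Longrightarrow> (\<lambda>x. p x - q x) \<in> polyfun"
  using polyfun.add[OF _ polyfun_cmult[of q "-1"], of p] by simp

lemma polyfun_matvec: "(\<lambda>x. (A *v x) $ i) \<in> polyfun"
proof -
  have "(\<lambda>x. \<Sum>j\<in>UNIV. A$i$j * x$j) \<in> polyfun"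
    by (intro polyfun_sum polyfun_cmult polyfun.var) auto
  then show ?thesis by (simp add: matrix_vector_mult_def)
qed

inductive_set epoly :: "(real^'n::finite \<Rightarrow> real^'n^'n \<Rightarrow> real) set" where
  ec: "(\<lambda>a M. c) \<in> epoly"
| ea: "(\<lambda>a M. a $ i) \<in> epoly"
| em: "(\<lambda>a M. M $ i $ j) \<in> epoly"
| eadd: "p \<in> epoly \<Longrightarrow> q \<in> epoly \<Longrightarrow> (\<lambda>a M. p a M + q a M) \<in> epoly"
| emult: "p \<in> epoly \<Longrightarrow> q \<in> epoly \<Longrightarrow> (\<lambda>a M. p a M * q a M) \<in> epoly"

lemma epoly_sum: "finite S \<Longrightarrow> (\<And>i. i \<in> S \<Longrightarrow> p i \<in> epoly) \<Longrightarrow> (\<lambda>a M. \<Sum>i\<in>S. p i a M) \<in> epoly"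
proof (induction S rule: finite_induct)
  case empty then show ?case by (simp add: epoly.ec)
next
  case (insert b F)
  then have "(\<lambda>a M. p b a M + (\<Sum>i\<in>F. p i a M)) \<in> epoly"
    by (intro epoly.eadd) auto
  then show ?case using insert by simp
qed

lemma epoly_subst:
  assumes "F \<in> epoly" "\<And>i. (\<lambda>z. A z $ i) \<in> polyfun" "\<And>i j. (\<lambda>z. B z $ i $ j) \<in> polyfun"
  shows "(\<lambda>z. F (A z) (B z)) \<in> polyfun"
  using assms(1)
proof (induction rule: epoly.induct)
  case (ec c) then show ?case by (rule polyfun.const)
next
  case (ea i) then show ?case by (rule assms(2))
next
  case (em i j) then show ?case by (rule assms(3))
next
  case (eadd p q) then show ?case using polyfun.add[of "\<lambda>z. p (A z) (B z)" "\<lambda>z. q (A z) (B z)"] by simp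
next
  case (emult p q) then show ?case using polyfun.mult[of "\<lambda>z. p (A z) (B z)" "\<lambda>z. q (A z) (B z)"] by simp
qed

lemma decomp:
  fixes u w :: "real^'n::finite \<Rightarrow> real^'n"
  assumes uw: "\<And>x. x = u x + w x"
  shows "p \<in> polyfun \<Longrightarrow> \<exists>F\<in>epoly. \<exists>Fs. (\<forall>j. Fs j \<in> epoly) \<and>
     (\<forall>x. p x = F (u x) (\<chi> i j. w x $ i * w x $ j) +
        (\<Sum>j\<in>UNIV. w x $ j * Fs j (u x) (\<chi> i j. w x $ i * w x $ j)))"
proof (induction rule: polyfun.induct)
  case (const c)
  have "(\<lambda>a M. c) \<in> epoly" by (rule epoly.ec)
  moreover have "\<forall>j. (\<lambda>j a M. 0::real) j \<in> epoly" using epoly.ec[of 0] by simp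
  moreover have "\<forall>x. c = (\<lambda>a M. c) (u x) (\<chi> i j. w x $ i * w x $ j) +
        (\<Sum>j\<in>UNIV. w x $ j * (\<lambda>j a M. 0::real) j (u x) (\<chi> i j. w x $ i * w x $ j))"
    by simp
  ultimately show ?case by (intro bexI exI conjI)
next
  case (var i)
  have "\<forall>x. x $ i = (\<lambda>a M. a $ i) (u x) (\<chi> i j. w x $ i * w x $ j) +
     (\<Sum>j\<in>UNIV. w x $ j * (\<lambda>j a M. if j = i then 1 else 0::real) j (u x) (\<chi> i j. w x $ i * w x $ j))"
  proof
    fix x
    have e: "x $ i = u x $ i + w x $ i" using uw[of x] by (metis vector_add_component)
    have "(\<Sum>j\<in>UNIV. w x $ j * (if j = i then 1 else 0::real)) = w x $ i"
      by (simp add: if_distrib cong: if_cong)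
    then show "x $ i = (\<lambda>a M. a $ i) (u x) (\<chi> i j. w x $ i * w x $ j) +
     (\<Sum>j\<in>UNIV. w x $ j * (\<lambda>j a M. if j = i then 1 else 0::real) j (u x) (\<chi> i j. w x $ i * w x $ j))"
      using e by simp
  qed
  moreover have "(\<lambda>a M. a $ i) \<in> epoly" by (rule epoly.ea)
  moreover have "\<forall>j. (\<lambda>j a M. if j = i then 1 else 0::real) j \<in> epoly"
  proof
    fix j
    show "(\<lambda>j a M. if j = i then 1 else 0::real) j \<in> epoly"
      using epoly.ec[of 1] epoly.ec[of 0] by (cases "j = i") simp_all
  qed
  ultimately show ?case by (intro bexI exI conjI)
next
  case (add p q)
  then obtain F1 Fs1 F2 Fs2 where h1: "F1 \<in> epoly" "\<forall>j. Fs1 j \<in> epoly"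
     "\<forall>x. p x = F1 (u x) (\<chi> i j. w x $ i * w x $ j) +
        (\<Sum>j\<in>UNIV. w x $ j * Fs1 j (u x) (\<chi> i j. w x $ i * w x $ j))"
    and h2: "F2 \<in> epoly" "\<forall>j. Fs2 j \<in> epoly"
     "\<forall>x. q x = F2 (u x) (\<chi> i j. w x $ i * w x $ j) +
        (\<Sum>j\<in>UNIV. w x $ j * Fs2 j (u x) (\<chi> i j. w x $ i * w x $ j))"
    by blast
  have "(\<lambda>a M. F1 a M + F2 a M) \<in> epoly" using h1(1) h2(1) by (rule epoly.eadd)
  moreover have "\<forall>j. (\<lambda>j a M. Fs1 j a M + Fs2 j a M) j \<in> epoly"
    using h1(2) h2(2) epoly.eadd by auto
  moreover have "\<forall>x. p x + q x = (\<lambda>a M. F1 a M + F2 a M) (u x) (\<chi> i j. w x $ i * w x $ j) +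
        (\<Sum>j\<in>UNIV. w x $ j * (\<lambda>j a M. Fs1 j a M + Fs2 j a M) j (u x) (\<chi> i j. w x $ i * w x $ j))"
  proof
    fix x
    show "p x + q x = (\<lambda>a M. F1 a M + F2 a M) (u x) (\<chi> i j. w x $ i * w x $ j) +
        (\<Sum>j\<in>UNIV. w x $ j * (\<lambda>j a M. Fs1 j a M + Fs2 j a M) j (u x) (\<chi> i j. w x $ i * w x $ j))"
      using h1(3) h2(3) by (simp only: distrib_left sum.distrib)
  qed
  ultimately show ?case by (intro bexI exI conjI)
next
  case (mult p q)
  then obtain F1 Fs1 F2 Fs2 where h1: "F1 \<in> epoly" "\<forall>j. Fs1 j \<in> epoly"
     "\<forall>x. p x = F1 (u x) (\<chi> i j. w x $ i * w x $ j) +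
        (\<Sum>j\<in>UNIV. w x $ j * Fs1 j (u x) (\<chi> i j. w x $ i * w x $ j))"
    and h2: "F2 \<in> epoly" "\<forall>j. Fs2 j \<in> epoly"
     "\<forall>x. q x = F2 (u x) (\<chi> i j. w x $ i * w x $ j) +
        (\<Sum>j\<in>UNIV. w x $ j * Fs2 j (u x) (\<chi> i j. w x $ i * w x $ j))"
    by blast
  define F where "F = (\<lambda>a M. F1 a M * F2 a M + (\<Sum>j\<in>UNIV. \<Sum>k\<in>UNIV. M$j$k * (Fs1 j a M * Fs2 k a M)))"
  define Fs where "Fs = (\<lambda>j a M. F1 a M * Fs2 j a M + F2 a M * Fs1 j a M)"
  have "F \<in> epoly"
  proof -
    have "(\<lambda>a M. M$j$k * (Fs1 j a M * Fs2 k a M)) \<in> epoly" for j k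
      by (rule epoly.emult[OF epoly.em epoly.emult[OF h1(2)[rule_format] h2(2)[rule_format]]])
    then have "(\<lambda>a M. \<Sum>k\<in>UNIV. M$j$k * (Fs1 j a M * Fs2 k a M)) \<in> epoly" for j
      by (rule epoly_sum[OF finite_class.finite_UNIV])
    then have "(\<lambda>a M. \<Sum>j\<in>UNIV. \<Sum>k\<in>UNIV. M$j$k * (Fs1 j a M * Fs2 k a M)) \<in> epoly"
      by (rule epoly_sum[OF finite_class.finite_UNIV])
    then show ?thesis unfolding F_def
      by (rule epoly.eadd[OF epoly.emult[OF h1(1) h2(1)]])
  qed
  moreover have "\<forall>j. Fs j \<in> epoly" unfolding Fs_def
    using h1 h2 epoly.eadd epoly.emult by blast
  moreover have "\<forall>x. p x * q x = F (u x) (\<chi> i j. w x $ i * w x $ j) +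
        (\<Sum>j\<in>UNIV. w x $ j * Fs j (u x) (\<chi> i j. w x $ i * w x $ j))"
  proof
    fix x
    define W where "W = (\<chi> i j. w x $ i * w x $ j)"
    define A where "A = F1 (u x) W"
    define B where "B = F2 (u x) W"
    define S1 where "S1 = (\<Sum>j\<in>UNIV. w x $ j * Fs1 j (u x) W)"
    define S2 where "S2 = (\<Sum>j\<in>UNIV. w x $ j * Fs2 j (u x) W)"
    have px: "p x = A + S1" using h1(3) unfolding A_def S1_def W_def by blast
    have qx: "q x = B + S2" using h2(3) unfolding B_def S2_def W_def by blast
    have pq: "p x * q x = A * B + S1 * S2 + (A * S2 + B * S1)"
      unfolding px qx by (simp add: algebra_simps)
    have "S1 * S2 = (\<Sum>j\<in>UNIV. \<Sum>k\<in>UNIV. (w x $ j * Fs1 j (u x) W) * (w x $ k * Fs2 k (u x) W))"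
      unfolding S1_def S2_def by (rule sum_product)
    also have "\<dots> = (\<Sum>j\<in>UNIV. \<Sum>k\<in>UNIV. W$j$k * (Fs1 j (u x) W * Fs2 k (u x) W))"
      unfolding W_def by (intro sum.cong refl) (simp add: algebra_simps)
    finally have s12: "S1 * S2 = \<dots>" .
    have "A * S2 + B * S1 = (\<Sum>j\<in>UNIV. A * (w x $ j * Fs2 j (u x) W)) + (\<Sum>j\<in>UNIV. B * (w x $ j * Fs1 j (u x) W))"
      unfolding S1_def S2_def by (simp only: sum_distrib_left)
    also have "\<dots> = (\<Sum>j\<in>UNIV. w x $ j * Fs j (u x) W)"
      unfolding sum.distrib[symmetric] Fs_def A_def B_def
      by (intro sum.cong refl) (simp add: algebra_simps)
    finally have s3: "A * S2 + B * S1 = (\<Sum>j\<in>UNIV. w x $ j * Fs j (u x) W)" .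
    have "F (u x) W = A * B + (\<Sum>j\<in>UNIV. \<Sum>k\<in>UNIV. W$j$k * (Fs1 j (u x) W * Fs2 k (u x) W))"
      unfolding F_def A_def B_def by simp
    then show "p x * q x = F (u x) (\<chi> i j. w x $ i * w x $ j) +
        (\<Sum>j\<in>UNIV. w x $ j * Fs j (u x) (\<chi> i j. w x $ i * w x $ j))"
      unfolding W_def[symmetric] using pq s12 s3 by simp
  qed
  ultimately show ?case by blast
qed

lemma rank1:
  fixes M :: "real^'n::finite^'n"
  assumes sym: "\<And>i j. M$i$j = M$j$i"
    and rk: "\<And>i j k l. M$i$j * M$k$l = M$i$l * M$k$j"
    and tr: "(\<Sum>i\<in>UNIV. M$i$i) \<ge> 0"
  shows "\<exists>y. \<forall>i j. M$i$j = y$i * y$j"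
proof (cases "\<exists>k. M$k$k > 0")
  case True
  then obtain k where k: "M$k$k > 0" by blast
  define y where "y = (\<chi> i. M$i$k / sqrt (M$k$k))"
  have "M$i$j = y$i * y$j" for i j
  proof -
    have "y$i * y$j = M$i$k * M$j$k / (sqrt (M$k$k) * sqrt (M$k$k))"
      by (simp add: y_def)
    also have "\<dots> = M$i$k * M$k$j / M$k$k" using k sym[of j k] by simp
    also have "\<dots> = M$i$j * M$k$k / M$k$k" using rk[of i j k k] by simp
    also have "\<dots> = M$i$j" using k by simp
    finally show ?thesis by simp
  qed
  then show ?thesis by blast
next
  case False
  then have nonpos: "\<And>i. M$i$i \<le> 0" by (meson not_less)
  have "\<forall>i\<in>UNIV. M$i$i = 0"
  proof -
    have "(\<Sum>i\<in>UNIV. M$i$i) \<le> 0" using nonpos by (simp add: sum_nonpos)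
    then have "(\<Sum>i\<in>UNIV. - M$i$i) = 0" using tr by (simp add: sum_negf)
    moreover have "\<forall>i\<in>UNIV. - M$i$i \<ge> 0" using nonpos by simp
    ultimately show ?thesis using sum_nonneg_eq_0_iff[of UNIV "\<lambda>i. - M$i$i"] by simp
  qed
  then have "M$i$j = 0" for i j
    using rk[of i j j i] sym[of i j] by simp
  then show ?thesis by (intro exI[of _ 0]) simp
qed

theorem lemma3p10:
  fixes G :: "(real^'n^'n) set"
    and \<pi> :: "'m::finite \<Rightarrow> (real^'n \<Rightarrow> real)"
    and fi :: "'n \<Rightarrow> (real^'n \<Rightarrow> real)"
    and f :: "real^'n \<Rightarrow> real"
  assumes "matrix_group G" and "card G = 2"
    and "fundamental_invariants G \<pi>"
    and "\<And>i. fi i = (\<lambda>x. x $ i - reynolds G (\<lambda>y. y $ i) x)"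
    and "f = (\<lambda>x. \<Sum>i\<in>UNIV. (fi i x)^2)"
  shows "f \<in> invariant_ring G \<and>
    hilbert_map \<pi> ` UNIV = {z \<in> real_variety (relation_ideal \<pi>). phi \<pi> z f \<ge> 0}"
proof -
  have grp: "G \<subseteq> {A. invertible A}" "mat 1 \<in> G" "\<forall>A\<in>G. matrix_inv A \<in> G"
    using assms(1) unfolding matrix_group_def by auto
  obtain \<tau> where tG: "G = {mat 1, \<tau>}" and tne: "\<tau> \<noteq> mat 1"
  proof -
    obtain x y where xy: "G = {x, y}" "x \<noteq> y" using assms(2) card_2_iff by metis
    show ?thesis
    proof (cases "x = mat 1")
      case True then show ?thesis using that xy by auto
    next
      case False then show ?thesis using that[of x] xy grp(2) by auto
    qed
  qed
  have invl: "A ** matrix_inv A = mat 1 \<and> matrix_inv A ** A = mat 1" if "invertible A" for A :: "real^'n^'n"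
    using that unfolding invertible_def matrix_inv_def by (rule someI_ex)
  have mi1: "matrix_inv (mat 1 :: real^'n^'n) = mat 1"
    using invl[of "mat 1"] grp by auto
  have tinvb: "invertible \<tau>" using grp tG by auto
  have tinv: "matrix_inv \<tau> = \<tau>"
  proof -
    have "matrix_inv \<tau> \<in> G" using grp tG by auto
    moreover have "matrix_inv \<tau> \<noteq> mat 1"
    proof
      assume "matrix_inv \<tau> = mat 1"
      then have "\<tau> = mat 1" using invl[OF tinvb] by simp
      then show False using tne by simp
    qed
    ultimately show ?thesis using tG by auto
  qed
  have tt: "\<tau> ** \<tau> = mat 1" using invl[OF tinvb] tinv by simp
  have ttx: "\<tau> *v (\<tau> *v x) = x" for x
    by (simp add: matrix_vector_mul_assoc tt)
  define u where "u = (\<lambda>x::real^'n. (1/2) *\<^sub>R (x + \<tau> *v x))"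
  define w where "w = (\<lambda>x::real^'n. (1/2) *\<^sub>R (x - \<tau> *v x))"
  have uw: "x = u x + w x" for x
    by (simp add: u_def w_def vec_eq_iff algebra_simps)
  have ut: "u (\<tau> *v x) = u x" for x by (simp add: u_def ttx algebra_simps)
  have wt: "w (\<tau> *v x) = - w x" for x by (simp add: w_def ttx algebra_simps)
  have tw: "\<tau> *v w x = - w x" for x
    by (simp add: w_def ttx matrix_vector_mult_scaleR matrix_vector_mult_diff_distrib algebra_simps)
  have tu: "\<tau> *v u x = u x" for x
    by (simp add: u_def ttx matrix_vector_mult_scaleR matrix_vector_right_distrib algebra_simps)
  have rey: "reynolds G (\<lambda>y. y$i) x = u x $ i" for i x
    unfolding reynolds_def act_def using tne assms(2)
    by (simp add: tG mi1 tinv u_def algebra_simps)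
  have fiw: "fi i x = w x $ i" for i x
    using assms(4) rey by (simp add: w_def u_def algebra_simps)
  have fw: "f = (\<lambda>x. \<Sum>i\<in>UNIV. w x $ i * w x $ i)"
    using assms(5) fiw by (simp add: power2_eq_square)
  have wpoly: "(\<lambda>x. w x $ i) \<in> polyfun" for i
  proof -
    have "(\<lambda>x. 1/2 * (x$i - (\<tau> *v x)$i)) \<in> polyfun"
      by (intro polyfun_cmult polyfun_diff polyfun.var polyfun_matvec)
    moreover have "(\<lambda>x. w x $ i) = (\<lambda>x. 1/2 * (x$i - (\<tau> *v x)$i))"
      by (rule ext) (simp add: w_def)
    ultimately show ?thesis by simp
  qed
  have upoly: "(\<lambda>x. u x $ i) \<in> polyfun" for i
  proof -
    have "(\<lambda>x. 1/2 * (x$i + (\<tau> *v x)$i)) \<in> polyfun"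
      by (intro polyfun_cmult polyfun.add polyfun.var polyfun_matvec)
    moreover have "(\<lambda>x. u x $ i) = (\<lambda>x. 1/2 * (x$i + (\<tau> *v x)$i))"
      by (rule ext) (simp add: u_def)
    ultimately show ?thesis by simp
  qed
  have act_t: "act \<sigma> h = (\<lambda>x. h (\<sigma> *v x))" if "\<sigma> \<in> G" for \<sigma> h
    using that tG mi1 tinv by (auto simp: act_def)
  have inv_iff: "h \<in> invariant_ring G" if "h \<in> polyfun" "\<And>x. h (\<tau> *v x) = h x" for h
    using that unfolding invariant_ring_def by (auto simp: act_t tG)
  have inv_t: "h (\<tau> *v x) = h x" if "h \<in> invariant_ring G" for h x
    using that unfolding invariant_ring_def using act_t[of \<tau> h] tG
    by (metis (mono_tags, lifting) insertCI mem_Collect_eq)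
  have inv_poly: "h \<in> polyfun" if "h \<in> invariant_ring G" for h
    using that unfolding invariant_ring_def by simp
  have fpoly: "f \<in> polyfun" unfolding fw
    by (intro polyfun_sum polyfun.mult wpoly) auto
  have finv: "f \<in> invariant_ring G"
    by (rule inv_iff[OF fpoly]) (simp add: fw wt)
  have fund1: "\<forall>j. \<pi> j \<in> invariant_ring G"
    and fund2: "\<forall>h\<in>invariant_ring G. \<exists>g\<in>polyfun. h = g \<circ> hilbert_map \<pi>"
    using assms(3) unfolding fundamental_invariants_def by auto
  have "\<forall>i. \<exists>gi. gi \<in> polyfun \<and> (\<lambda>x. u x $ i) = gi \<circ> hilbert_map \<pi>"
  proof
    fix i
    have "(\<lambda>x. u x $ i) \<in> invariant_ring G" by (rule inv_iff[OF upoly]) (simp add: ut)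
    then have "\<exists>gi\<in>polyfun. (\<lambda>x. u x $ i) = gi \<circ> hilbert_map \<pi>" using fund2 by (rule bspec[rotated])
    then show "\<exists>gi. gi \<in> polyfun \<and> (\<lambda>x. u x $ i) = gi \<circ> hilbert_map \<pi>" by (simp only: Bex_def)
  qed
  from choice[OF this] obtain g where g: "\<And>i. g i \<in> polyfun"
    "\<And>i. (\<lambda>x. u x $ i) = g i \<circ> hilbert_map \<pi>" by blast
  have "\<forall>p. \<exists>hp. hp \<in> polyfun \<and> (\<lambda>x. w x $ fst p * w x $ snd p) = hp \<circ> hilbert_map \<pi>"
  proof
    fix p :: "'n \<times> 'n"
    have "(\<lambda>x. w x $ fst p * w x $ snd p) \<in> invariant_ring G"
      by (rule inv_iff[OF polyfun.mult[OF wpoly wpoly]]) (simp add: wt)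
    then have "\<exists>hp\<in>polyfun. (\<lambda>x. w x $ fst p * w x $ snd p) = hp \<circ> hilbert_map \<pi>"
      using fund2 by (rule bspec[rotated])
    then show "\<exists>hp. hp \<in> polyfun \<and> (\<lambda>x. w x $ fst p * w x $ snd p) = hp \<circ> hilbert_map \<pi>"
      by (simp only: Bex_def)
  qed
  from choice[OF this] obtain H where H: "\<And>p. H p \<in> polyfun"
    "\<And>p. (\<lambda>x. w x $ fst p * w x $ snd p) = H p \<circ> hilbert_map \<pi>" by blast
  define h where "h = (\<lambda>i j. H (i, j))"
  have hpoly: "h i j \<in> polyfun" for i j using H(1) by (simp add: h_def)
  have gP: "g i (hilbert_map \<pi> x) = u x $ i" for i x
    using fun_cong[OF g(2)[of i], of x] by simp
  have hP: "h i j (hilbert_map \<pi> x) = w x $ i * w x $ j" for i j x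
    using fun_cong[OF H(2)[of "(i,j)"], of x] by (simp add: h_def)
  have rel: "q z = 0" if "q \<in> polyfun" "\<And>x. q (hilbert_map \<pi> x) = 0"
     "z \<in> real_variety (relation_ideal \<pi>)" for q z
    using that by (auto simp: real_variety_def relation_ideal_def)
  have "\<forall>l. \<exists>F. F \<in> epoly \<and> (\<forall>x. \<pi> l x = F (u x) (\<chi> i j. w x $ i * w x $ j))"
  proof
    fix l
    have pl: "\<pi> l \<in> polyfun" "\<And>x. \<pi> l (\<tau> *v x) = \<pi> l x"
      using fund1 inv_poly inv_t by auto
    obtain F Fs where F: "F \<in> epoly" "\<forall>x. \<pi> l x = F (u x) (\<chi> i j. w x $ i * w x $ j) +
        (\<Sum>j\<in>UNIV. w x $ j * Fs j (u x) (\<chi> i j. w x $ i * w x $ j))"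
      using decomp[OF uw pl(1)] by blast
    have "\<pi> l x = F (u x) (\<chi> i j. w x $ i * w x $ j)" for x
    proof -
      have "\<pi> l x = \<pi> l (\<tau> *v x)" using pl(2) by simp
      also have "\<dots> = F (u x) (\<chi> i j. w x $ i * w x $ j) -
        (\<Sum>j\<in>UNIV. w x $ j * Fs j (u x) (\<chi> i j. w x $ i * w x $ j))"
        using F(2) by (simp add: ut wt sum_negf)
      finally show ?thesis using F(2) by simp
    qed
    then show "\<exists>F. F \<in> epoly \<and> (\<forall>x. \<pi> l x = F (u x) (\<chi> i j. w x $ i * w x $ j))"
      using F(1) by blast
  qed
  from choice[OF this] obtain FF where FF: "\<And>l. FF l \<in> epoly"
    "\<And>l x. \<pi> l x = FF l (u x) (\<chi> i j. w x $ i * w x $ j)" by blast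
  obtain g0 where g0: "g0 \<in> polyfun" "f = g0 \<circ> hilbert_map \<pi>"
    using fund2 finv by blast
  have phi_eq: "phi \<pi> z f = g1 z \<and> g1 \<in> polyfun \<and> f = g1 \<circ> hilbert_map \<pi>"
    if "g1 = (SOME g. g \<in> polyfun \<and> f = g \<circ> hilbert_map \<pi>)" for z g1
    using someI_ex[of "\<lambda>g. g \<in> polyfun \<and> f = g \<circ> hilbert_map \<pi>"] g0 that
    unfolding phi_def by blast
  show ?thesis
  proof (intro conjI equalityI subsetI finv)
    fix z assume "z \<in> range (hilbert_map \<pi>)"
    then obtain x where zx: "z = hilbert_map \<pi> x" by blast
    have "z \<in> real_variety (relation_ideal \<pi>)"
      using zx by (auto simp: real_variety_def relation_ideal_def)
    moreover have "phi \<pi> z f \<ge> 0"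
    proof -
      obtain g1 where "phi \<pi> z f = g1 z" "f = g1 \<circ> hilbert_map \<pi>" using phi_eq by blast
      then have "phi \<pi> z f = f x" using zx by simp
      also have "f x \<ge> 0" using assms(5) by (simp add: sum_nonneg)
      finally show ?thesis .
    qed
    ultimately show "z \<in> {z \<in> real_variety (relation_ideal \<pi>). phi \<pi> z f \<ge> 0}" by blast
  next
    fix z assume "z \<in> {z \<in> real_variety (relation_ideal \<pi>). phi \<pi> z f \<ge> 0}"
    then have zV: "z \<in> real_variety (relation_ideal \<pi>)" and zphi: "phi \<pi> z f \<ge> 0" by auto
    define a where "a = (\<chi> i. g i z)"
    define M where "M = (\<chi> i j. h i j z)"
    have Msym: "M$i$j = M$j$i" for i j
    proof -
      have "(\<lambda>z. h i j z - h j i z) z = 0"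
        by (rule rel[OF polyfun_diff[OF hpoly hpoly] _ zV]) (simp add: hP)
      then show ?thesis by (simp add: M_def)
    qed
    have Mrk: "M$i$j * M$k$l = M$i$l * M$k$j" for i j k l
    proof -
      have "(\<lambda>z. h i j z * h k l z - h i l z * h k j z) z = 0"
        by (rule rel[OF polyfun_diff[OF polyfun.mult[OF hpoly hpoly] polyfun.mult[OF hpoly hpoly]] _ zV])
           (simp add: hP)
      then show ?thesis by (simp add: M_def)
    qed
    have Mtau: "(\<Sum>k\<in>UNIV. \<tau>$i$k * M$k$j) = - M$i$j" for i j
    proof -
      have "(\<lambda>z. (\<Sum>k\<in>UNIV. \<tau>$i$k * h k j z) + h i j z) z = 0"
      proof (rule rel[OF polyfun.add[OF polyfun_sum[OF _ polyfun_cmult[OF hpoly]] hpoly] _ zV])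
        fix x
        have "(\<Sum>k\<in>UNIV. \<tau>$i$k * (w x $ k * w x $ j)) = (\<tau> *v w x)$i * w x $ j"
          by (simp add: matrix_vector_mult_def sum_distrib_right mult.assoc)
        then show "(\<Sum>k\<in>UNIV. \<tau>$i$k * h k j (hilbert_map \<pi> x)) + h i j (hilbert_map \<pi> x) = 0"
          by (simp add: hP tw)
      qed simp
      then show ?thesis by (simp add: M_def)
    qed
    have atau: "\<tau> *v a = a"
    proof -
      have "(\<lambda>z. (\<Sum>k\<in>UNIV. \<tau>$i$k * g k z) - g i z) z = 0" for i
      proof (rule rel[OF polyfun_diff[OF polyfun_sum[OF _ polyfun_cmult[OF g(1)]] g(1)] _ zV])
        fix x
        have "(\<Sum>k\<in>UNIV. \<tau>$i$k * u x $ k) = (\<tau> *v u x)$i"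
          by (simp add: matrix_vector_mult_def)
        then show "(\<Sum>k\<in>UNIV. \<tau>$i$k * g k (hilbert_map \<pi> x)) - g i (hilbert_map \<pi> x) = 0"
          by (simp add: gP tu)
      qed simp
      then show ?thesis by (simp add: a_def vec_eq_iff matrix_vector_mult_def)
    qed
    have trace: "(\<Sum>i\<in>UNIV. M$i$i) \<ge> 0"
    proof -
      obtain g1 where g1: "phi \<pi> z f = g1 z" "g1 \<in> polyfun" "f = g1 \<circ> hilbert_map \<pi>"
        using phi_eq by blast
      have "(\<lambda>z. g1 z - (\<Sum>i\<in>UNIV. h i i z)) z = 0"
      proof (rule rel[OF polyfun_diff[OF g1(2) polyfun_sum[OF _ hpoly]] _ zV])
        fix x
        show "g1 (hilbert_map \<pi> x) - (\<Sum>i\<in>UNIV. h i i (hilbert_map \<pi> x)) = 0"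
          using fun_cong[OF g1(3), of x] by (simp add: hP fw)
      qed simp
      then show ?thesis using zphi g1(1) by (simp add: M_def)
    qed
    obtain y where y: "\<And>i j. M$i$j = y$i * y$j"
      using rank1[OF Msym Mrk trace] by blast
    have ytau: "\<tau> *v y = - y"
    proof (cases "y = 0")
      case True then show ?thesis by simp
    next
      case False
      then obtain j where j: "y$j \<noteq> 0" by (metis vec_eq_iff zero_index)
      have "(\<tau> *v y)$i = - y$i" for i
      proof -
        have "(\<tau> *v y)$i * y$j = (\<Sum>k\<in>UNIV. \<tau>$i$k * M$k$j)"
          by (simp add: y matrix_vector_mult_def sum_distrib_right mult.assoc)
        also have "\<dots> = - y$i * y$j" using Mtau y by simp
        finally show ?thesis using j by (metis minus_mult_left mult_right_cancel)
      qed
      then show ?thesis by (simp add: vec_eq_iff)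
    qed
    define x0 where "x0 = a + y"
    have ux0: "u x0 = a"
      by (simp add: u_def x0_def matrix_vector_right_distrib atau ytau vec_eq_iff)
    have wx0: "w x0 = y"
      by (simp add: w_def x0_def matrix_vector_right_distrib atau ytau vec_eq_iff)
    have Wx0: "(\<chi> i j. w x0 $ i * w x0 $ j) = M"
      by (simp add: wx0 y vec_eq_iff)
    have "z$l = \<pi> l x0" for l
    proof -
      have "(\<lambda>z. z$l - FF l (\<chi> i. g i z) (\<chi> i j. h i j z)) z = 0"
      proof (rule rel[OF polyfun_diff[OF polyfun.var epoly_subst[OF FF(1)]] _ zV])
        fix x
        have "(\<chi> i. g i (hilbert_map \<pi> x)) = u x" by (simp add: gP vec_eq_iff)
        moreover have "(\<chi> i j. h i j (hilbert_map \<pi> x)) = (\<chi> i j. w x $ i * w x $ j)"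
          by (simp add: hP)
        ultimately show "hilbert_map \<pi> x $ l - FF l (\<chi> i. g i (hilbert_map \<pi> x)) (\<chi> i j. h i j (hilbert_map \<pi> x)) = 0"
          by (simp add: hilbert_map_def FF(2))
      qed (simp_all add: g hpoly)
      then have "z$l = FF l a M" by (simp add: a_def M_def)
      also have "\<dots> = \<pi> l x0" using FF(2)[of l x0] ux0 Wx0 by simp
      finally show ?thesis .
    qed
    then have "z = hilbert_map \<pi> x0" by (simp add: hilbert_map_def vec_eq_iff)
    then show "z \<in> range (hilbert_map \<pi>)" by blast
  qed
qed

end
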